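(* Let $(\Sigma,E)$ be an algebraic theory with free monad $(T,\eta,\mu)$, and let $\alpha:TX\to X$ be a $T$-semialgebra. Let $(X,I)$ be the $\Sigma^{\mathrm{s}}$-algebra with $I(\mathsf{a})=\alpha\circ\eta_X$ and $I(\mathsf{op})=\alpha\circ\mathsf{op}^{TX}\circ(\eta_X)^n$ for each $(\mathsf{op}:n)\in\Sigma$. Then for every $\Sigma$-term $t(v_1,\dots,v_n)$ over $\mathrm{Var}$ of depth at least $1$ and every assignment $\sigma:\mathrm{Var}\to X$, $I(t)_\sigma=\alpha\big(\mathsf{int}^{TX}(t)_{\eta_X\circ\sigma}\big)$.
   Context: $T=T_{\Sigma,E}$: $TX$ is the set of $\Sigma$-terms over $X$ modulo the smallest congruence containing substitution instances of $E$, a $(\Sigma,E)$-algebra via $\mathsf{op}^{TX}(\overline{t_1},\dots,\overline{t_n})=\overline{\mathsf{op}(t_1,\dots,t_n)}$; $\eta_X(x)=\overline{x}$; $\mu_X$ flattens terms. A $T$-semialgebra is $\alpha:TX\to X$ with $\alpha\circ\mu_X=\alpha\circ T\alpha$. $\Sigma^{\mathrm{s}}=\Sigma\uplus\{\mathsf{a}:1\}$. For a $\Sigma$- (or $\Sigma^{\mathrm{s}}$-) algebra $(X,I)$ and a function $f:\mathrm{Var}\to X$, $I(t)_f$ denotes the value of $t$: $I(v)_f=f(v)$, $I(\mathsf{op}(t_1,\dots,t_n))_f=I(\mathsf{op})(I(t_1)_f,\dots,I(t_n)_f)$; $\mathsf{int}^{TX}(t)_g$ denotes the analogous value in the algebra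 $(TX,\mathsf{op}^{TX})$ under $g:\mathrm{Var}\to TX$. Depth: variables depth $0$, constants depth $1$, $\mathsf{op}(t_1,\dots,t_n)$ depth $1+\max$. *)

theory Defs
  imports Main
begin

(* Sigma-terms: signature symbols of type 'f with arity function ar :: 'f => nat *)
datatype ('f, 'v) trm = Var 'v | App 'f "('f, 'v) trm list"

fun vars :: "('f, 'v) trm \<Rightarrow> 'v set" where
  "vars (Var v) = {v}"
| "vars (App f ts) = (\<Union>t\<in>set ts. vars t)"

fun wf :: "('f \<Rightarrow> nat) \<Rightarrow> 'v set \<Rightarrow> ('f, 'v) trm \<Rightarrow> bool" where
  "wf ar A (Var v) = (v \<in> A)"
| "wf ar A (App f ts) = (length ts = ar f \<and> (\<forall>t\<in>set ts. wf ar A t))"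

fun subst :: "('v \<Rightarrow> ('f, 'w) trm) \<Rightarrow> ('f, 'v) trm \<Rightarrow> ('f, 'w) trm" where
  "subst \<theta> (Var v) = \<theta> v"
| "subst \<theta> (App f ts) = App f (map (subst \<theta>) ts)"

fun rename :: "('v \<Rightarrow> 'w) \<Rightarrow> ('f, 'v) trm \<Rightarrow> ('f, 'w) trm" where
  "rename g (Var v) = Var (g v)"
| "rename g (App f ts) = App f (map (rename g) ts)"

fun eval :: "('f \<Rightarrow> 'a list \<Rightarrow> 'a) \<Rightarrow> ('v \<Rightarrow> 'a) \<Rightarrow> ('f, 'v) trm \<Rightarrow> 'a" where
  "eval I f (Var v) = f v"
| "eval I f (App g ts) = I g (map (eval I f) ts)"

fun depth :: "('f, 'v) trm \<Rightarrow> nat" where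
  "depth (Var v) = 0"
| "depth (App f ts) = Suc (foldr max (map depth ts) 0)"

inductive eqvE :: "('f \<Rightarrow> nat) \<Rightarrow> (('f, 'v) trm \<times> ('f, 'v) trm) set \<Rightarrow> 'x set
                   \<Rightarrow> ('f, 'x) trm \<Rightarrow> ('f, 'x) trm \<Rightarrow> bool"
  for ar E A where
  refl: "wf ar A t \<Longrightarrow> eqvE ar E A t t"
| sym: "eqvE ar E A t u \<Longrightarrow> eqvE ar E A u t"
| trans: "eqvE ar E A t u \<Longrightarrow> eqvE ar E A u w \<Longrightarrow> eqvE ar E A t w"
| cong: "length ts = ar f \<Longrightarrow> list_all2 (eqvE ar E A) ts us
          \<Longrightarrow> eqvE ar E A (App f ts) (App f us)"
| inst: "(l, r) \<in> E \<Longrightarrow> (\<forall>v \<in> vars l \<union> vars r. wf ar A (\<theta> v))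
          \<Longrightarrow> eqvE ar E A (subst \<theta> l) (subst \<theta> r)"

definition cls :: "('f \<Rightarrow> nat) \<Rightarrow> (('f, 'v) trm \<times> ('f, 'v) trm) set \<Rightarrow> 'x set
                   \<Rightarrow> ('f, 'x) trm \<Rightarrow> ('f, 'x) trm set" where
  "cls ar E A t = {u. eqvE ar E A t u}"

definition TX :: "('f \<Rightarrow> nat) \<Rightarrow> (('f, 'v) trm \<times> ('f, 'v) trm) set \<Rightarrow> 'x set
                  \<Rightarrow> ('f, 'x) trm set set" where
  "TX ar E A = cls ar E A ` {t. wf ar A t}"

definition rep :: "'a set \<Rightarrow> 'a" where
  "rep c = (SOME t. t \<in> c)"

definition etaT :: "('f \<Rightarrow> nat) \<Rightarrow> (('f, 'v) trm \<times> ('f, 'v) trm) set \<Rightarrow> 'x set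
                    \<Rightarrow> 'x \<Rightarrow> ('f, 'x) trm set" where
  "etaT ar E A x = cls ar E A (Var x)"

definition opT :: "('f \<Rightarrow> nat) \<Rightarrow> (('f, 'v) trm \<times> ('f, 'v) trm) set \<Rightarrow> 'x set
                   \<Rightarrow> 'f \<Rightarrow> ('f, 'x) trm set list \<Rightarrow> ('f, 'x) trm set" where
  "opT ar E A f cs = cls ar E A (App f (map rep cs))"

definition Tmap :: "('f \<Rightarrow> nat) \<Rightarrow> (('f, 'v) trm \<times> ('f, 'v) trm) set \<Rightarrow> 'y set
                    \<Rightarrow> ('x \<Rightarrow> 'y) \<Rightarrow> ('f, 'x) trm set \<Rightarrow> ('f, 'y) trm set" where
  "Tmap ar E B g c = cls ar E B (rename g (rep c))"

definition muT :: "('f \<Rightarrow> nat) \<Rightarrow> (('f, 'v) trm \<times> ('f, 'v) trm) set \<Rightarrow> 'x set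
                   \<Rightarrow> ('f, ('f, 'x) trm set) trm set \<Rightarrow> ('f, 'x) trm set" where
  "muT ar E A \<Phi> = cls ar E A (subst rep (rep \<Phi>))"

definition semialgebra :: "('f \<Rightarrow> nat) \<Rightarrow> (('f, 'v) trm \<times> ('f, 'v) trm) set \<Rightarrow> 'x set
                           \<Rightarrow> (('f, 'x) trm set \<Rightarrow> 'x) \<Rightarrow> bool" where
  "semialgebra ar E X \<alpha> \<longleftrightarrow>
     (\<forall>c \<in> TX ar E X. \<alpha> c \<in> X) \<and>
     (\<forall>\<Phi> \<in> TX ar E (TX ar E X).
        \<alpha> (muT ar E X \<Phi>) = \<alpha> (Tmap ar E X \<alpha> \<Phi>))"

(* the Sigma^s-algebra (X, I) induced by alpha; Sigma^s = Sigma + {a:1},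
   encoded as 'f option with None = a *)
fun semialg_interp :: "('f \<Rightarrow> nat) \<Rightarrow> (('f, 'v) trm \<times> ('f, 'v) trm) set \<Rightarrow> 'x set
                        \<Rightarrow> (('f, 'x) trm set \<Rightarrow> 'x) \<Rightarrow> 'f option \<Rightarrow> 'x list \<Rightarrow> 'x" where
  "semialg_interp ar E X \<alpha> None xs = \<alpha> (etaT ar E X (hd xs))"
| "semialg_interp ar E X \<alpha> (Some f) xs = \<alpha> (opT ar E X f (map (etaT ar E X) xs))"

end

theory Submission
  imports Defs
begin

lemma wf_subst:
  "wf ar B l \<Longrightarrow> (\<forall>v\<in>vars l. wf ar A (\<theta> v)) \<Longrightarrow> wf ar A (subst \<theta> l)"
  by (induction l) auto

lemma wf_subst2:
  "wf ar A t \<Longrightarrow> (\<forall>v\<in>A. wf ar B (\<theta> v)) \<Longrightarrow> wf ar B (subst \<theta> t)"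
  by (induction t) auto

lemma subst_subst: "subst \<theta> (subst \<theta>' l) = subst (subst \<theta> \<circ> \<theta>') l"
  by (induction l) auto

lemma rename_subst: "rename g t = subst (Var \<circ> g) t"
  by (induction t) auto

lemma eqvE_wf:
  assumes E_wf: "\<forall>(l, r) \<in> E. wf ar UNIV l \<and> wf ar UNIV r"
  shows "eqvE ar E A t u \<Longrightarrow> wf ar A t \<and> wf ar A u"
proof (induction rule: eqvE.induct)
  case (cong ts f us)
  then show ?case by (auto simp: list_all2_conv_all_nth in_set_conv_nth)
next
  case (inst l r \<theta>)
  then show ?case using E_wf by (auto intro!: wf_subst[where B=UNIV])
qed auto

lemma eqvE_subst:
  "eqvE ar E A t u \<Longrightarrow> (\<forall>v\<in>A. wf ar B (\<theta> v)) \<Longrightarrow> eqvE ar E B (subst \<theta> t) (subst \<theta> u)"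
proof (induction rule: eqvE.induct)
  case (refl t)
  then show ?case by (auto intro!: eqvE.refl wf_subst2)
next
  case (sym t u)
  then show ?case by (auto intro: eqvE.sym)
next
  case (trans t u w)
  then show ?case by (auto intro: eqvE.trans)
next
  case (cong ts f us)
  have "list_all2 (eqvE ar E B) (map (subst \<theta>) ts) (map (subst \<theta>) us)"
    using cong by (auto simp: list_all2_conv_all_nth)
  then show ?case using cong by (auto intro!: eqvE.cong)
next
  case (inst l r \<theta>')
  have "eqvE ar E B (subst (subst \<theta> \<circ> \<theta>') l) (subst (subst \<theta> \<circ> \<theta>') r)"
    using inst by (intro eqvE.inst) (auto intro!: wf_subst2)
  then show ?case by (simp add: subst_subst)
qed

lemma cls_eq: "eqvE ar E A t u \<Longrightarrow> cls ar E A t = cls ar E A u"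
  unfolding cls_def by (auto intro: eqvE.sym eqvE.trans)

lemma rep_cls: "wf ar A t \<Longrightarrow> eqvE ar E A t (rep (cls ar E A t))"
proof -
  assume "wf ar A t"
  then have "eqvE ar E A t t" by (rule eqvE.refl)
  then have "eqvE ar E A t (SOME u. eqvE ar E A t u)" by (rule someI)
  then show ?thesis unfolding rep_def cls_def by simp
qed

lemma rep_TX:
  assumes E_wf: "\<forall>(l, r) \<in> E. wf ar UNIV l \<and> wf ar UNIV r" and c: "c \<in> TX ar E A"
  shows "wf ar A (rep c)" "cls ar E A (rep c) = c"
proof -
  obtain t where t: "wf ar A t" "c = cls ar E A t" using c unfolding TX_def by auto
  have e: "eqvE ar E A t (rep c)" using rep_cls t by metis
  show "wf ar A (rep c)" using eqvE_wf[OF E_wf e] by auto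
  show "cls ar E A (rep c) = c" using cls_eq[OF e] t by simp
qed

lemma cls_TX: "wf ar A t \<Longrightarrow> cls ar E A t \<in> TX ar E A"
  unfolding TX_def by auto

lemma K0:
  assumes E_wf: "\<forall>(l, r) \<in> E. wf ar UNIV l \<and> wf ar UNIV r"
    and semi: "semialgebra ar E X \<alpha>" and c: "c \<in> TX ar E X"
  shows "\<alpha> (etaT ar E X (\<alpha> c)) = \<alpha> c"
proof -
  let ?Y = "TX ar E X"
  define \<Phi> where "\<Phi> = cls ar E ?Y (Var c)"
  have w: "wf ar ?Y (Var c)" using c by simp
  have P: "\<Phi> \<in> TX ar E ?Y" unfolding \<Phi>_def using w by (rule cls_TX)
  have e: "eqvE ar E ?Y (Var c) (rep \<Phi>)" unfolding \<Phi>_def using rep_cls[OF w] .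
  have wr: "\<forall>v\<in>?Y. wf ar X (rep v)" using rep_TX[OF E_wf] by auto
  have "eqvE ar E X (rep c) (subst rep (rep \<Phi>))"
    using eqvE_subst[OF e wr] by simp
  hence m: "muT ar E X \<Phi> = c" unfolding muT_def
    using cls_eq rep_TX(2)[OF E_wf c] by metis
  have wa: "\<forall>v\<in>?Y. wf ar X ((Var \<circ> \<alpha>) v)" using semi unfolding semialgebra_def by auto
  have "eqvE ar E X (Var (\<alpha> c)) (rename \<alpha> (rep \<Phi>))"
    using eqvE_subst[OF e wa] by (simp add: rename_subst comp_def)
  hence t: "Tmap ar E X \<alpha> \<Phi> = etaT ar E X (\<alpha> c)" unfolding Tmap_def etaT_def
    using cls_eq by metis
  show ?thesis using semi P m t unfolding semialgebra_def by metis
qed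

lemma K:
  assumes E_wf: "\<forall>(l, r) \<in> E. wf ar UNIV l \<and> wf ar UNIV r"
    and semi: "semialgebra ar E X \<alpha>" and cs: "set cs \<subseteq> TX ar E X"
    and len: "length cs = ar f"
  shows "\<alpha> (opT ar E X f cs) = \<alpha> (cls ar E X (App f (map (Var \<circ> \<alpha>) cs)))"
proof -
  let ?Y = "TX ar E X"
  define \<Phi> where "\<Phi> = cls ar E ?Y (App f (map Var cs))"
  have w: "wf ar ?Y (App f (map Var cs))" using cs len by auto
  have P: "\<Phi> \<in> TX ar E ?Y" unfolding \<Phi>_def using w by (rule cls_TX)
  have e: "eqvE ar E ?Y (App f (map Var cs)) (rep \<Phi>)" unfolding \<Phi>_def using rep_cls[OF w] .
  have wr: "\<forall>v\<in>?Y. wf ar X (rep v)" using rep_TX[OF E_wf] by auto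
  have "eqvE ar E X (App f (map rep cs)) (subst rep (rep \<Phi>))"
    using eqvE_subst[OF e wr] by (simp add: comp_def)
  hence m: "muT ar E X \<Phi> = opT ar E X f cs" unfolding muT_def opT_def
    using cls_eq by metis
  have wa: "\<forall>v\<in>?Y. wf ar X ((Var \<circ> \<alpha>) v)" using semi unfolding semialgebra_def by auto
  have "eqvE ar E X (App f (map (Var \<circ> \<alpha>) cs)) (rename \<alpha> (rep \<Phi>))"
    using eqvE_subst[OF e wa] by (simp add: rename_subst comp_def)
  hence t: "Tmap ar E X \<alpha> \<Phi> = cls ar E X (App f (map (Var \<circ> \<alpha>) cs))" unfolding Tmap_def
    using cls_eq by metis
  show ?thesis using semi P m t unfolding semialgebra_def by metis
qed

lemma main:
  assumes E_wf: "\<forall>(l, r) \<in> E. wf ar UNIV l \<and> wf ar UNIV r"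
    and semi: "semialgebra ar E X \<alpha>"
    and \<sigma>: "\<forall>v. \<sigma> v \<in> X"
  shows "wf ar UNIV t \<Longrightarrow>
     eval (\<lambda>f. semialg_interp ar E X \<alpha> (Some f)) \<sigma> t \<in> X \<and>
     eval (opT ar E X) (etaT ar E X \<circ> \<sigma>) t \<in> TX ar E X \<and>
     (depth t \<ge> 1 \<longrightarrow> eval (\<lambda>f. semialg_interp ar E X \<alpha> (Some f)) \<sigma> t
         = \<alpha> (eval (opT ar E X) (etaT ar E X \<circ> \<sigma>) t))"
proof (induction t)
  case (Var v)
  then show ?case using \<sigma> by (auto simp: etaT_def intro!: cls_TX)
next
  case (App f ts)
  let ?I = "eval (\<lambda>f. semialg_interp ar E X \<alpha> (Some f)) \<sigma>"
  let ?R = "eval (opT ar E X) (etaT ar E X \<circ> \<sigma>)"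
  define ds where "ds = map (etaT ar E X \<circ> ?I) ts"
  define cs where "cs = map ?R ts"
  have IH: "\<And>t. t \<in> set ts \<Longrightarrow> ?I t \<in> X \<and> ?R t \<in> TX ar E X \<and>
        (depth t \<ge> 1 \<longrightarrow> ?I t = \<alpha> (?R t))"
  proof -
    fix t assume t: "t \<in> set ts"
    then have "wf ar UNIV t" using App.prems by simp
    then show "?I t \<in> X \<and> ?R t \<in> TX ar E X \<and> (depth t \<ge> 1 \<longrightarrow> ?I t = \<alpha> (?R t))"
      using App.IH[OF t] by blast
  qed
  have len: "length ts = ar f" using App.prems by simp
  have dsT: "set ds \<subseteq> TX ar E X" unfolding ds_def etaT_def using IH
    by (auto intro!: cls_TX)
  have csT: "set cs \<subseteq> TX ar E X" unfolding cs_def using IH by auto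
  have opT_in: "\<And>xs. set xs \<subseteq> TX ar E X \<Longrightarrow> length xs = ar f \<Longrightarrow> opT ar E X f xs \<in> TX ar E X"
  proof -
    fix xs assume xs: "set xs \<subseteq> TX ar E X" "length xs = ar f"
    have "wf ar X (App f (map rep xs))" using xs rep_TX(1)[OF E_wf] by auto
    then show "opT ar E X f xs \<in> TX ar E X" unfolding opT_def by (rule cls_TX)
  qed
  have same: "map (Var \<circ> \<alpha>) ds = map (Var \<circ> \<alpha>) cs"
  proof -
    have "\<forall>t\<in>set ts. (Var \<circ> \<alpha>) ((etaT ar E X \<circ> ?I) t) = (Var \<circ> \<alpha>) (?R t)"
    proof
    fix t assume t: "t \<in> set ts"
    show "(Var \<circ> \<alpha>) ((etaT ar E X \<circ> ?I) t) = (Var \<circ> \<alpha>) (?R t)"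
    proof (cases t)
      case (Var v) then show ?thesis by simp
    next
      case (App g us)
      then have "depth t \<ge> 1" by simp
      then have "?I t = \<alpha> (?R t)" using IH[OF t] by simp
      then show ?thesis using K0[OF E_wf semi] IH[OF t] by simp
    qed
    qed
    then show ?thesis unfolding ds_def cs_def by simp
  qed
  have lhs: "?I (App f ts) = \<alpha> (opT ar E X f ds)" unfolding ds_def by (simp add: comp_def)
  have rhs: "?R (App f ts) = opT ar E X f cs" unfolding cs_def by simp
  have "\<alpha> (opT ar E X f ds) = \<alpha> (opT ar E X f cs)"
  proof -
    have l1: "length ds = ar f" "length cs = ar f" using len unfolding ds_def cs_def by simp_all
    show ?thesis using K[OF E_wf semi dsT l1(1)] K[OF E_wf semi csT l1(2)] same by metis
  qed
  moreover have "\<alpha> (opT ar E X f ds) \<in> X"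
  proof -
    have "length ds = ar f" using len unfolding ds_def by simp
    then have "opT ar E X f ds \<in> TX ar E X" using opT_in[OF dsT] by blast
    then show ?thesis using semi unfolding semialgebra_def by blast
  qed
  moreover have "opT ar E X f cs \<in> TX ar E X"
    using opT_in[OF csT] len unfolding cs_def by simp
  ultimately show ?case unfolding lhs rhs by (simp del: semialg_interp.simps)
qed

theorem lemma9:
  fixes ar :: "'f \<Rightarrow> nat"
    and E :: "(('f, 'v) trm \<times> ('f, 'v) trm) set"
    and X :: "'x set"
    and \<alpha> :: "('f, 'x) trm set \<Rightarrow> 'x"
    and t :: "('f, 'v) trm"
    and \<sigma> :: "'v \<Rightarrow> 'x"
  assumes E_wf: "\<forall>(l, r) \<in> E. wf ar UNIV l \<and> wf ar UNIV r"
    and semi: "semialgebra ar E X \<alpha>"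
    and t_wf: "wf ar UNIV t"
    and depth: "depth t \<ge> 1"
    and \<sigma>: "\<forall>v. \<sigma> v \<in> X"
  shows "eval (\<lambda>f. semialg_interp ar E X \<alpha> (Some f)) \<sigma> t
         = \<alpha> (eval (opT ar E X) (etaT ar E X \<circ> \<sigma>) t)"
  using main[OF E_wf semi \<sigma> t_wf] depth by blast

end
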